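(* Let $\mathcal{P}$ be a finite poset and let $N\in\mathrm{vec}^{\operatorname{Int}\mathcal{P}}$ be such that for all $a\le b\le c\le d$ in $\mathcal{P}\cup\{\infty\}$ the structure morphism $N(a,b)\to N(c,d)$ is zero. Then for every integer $d>0$, \[ \operatorname{Tor}_d^{\mathbb{k}(\operatorname{Int}\mathcal{P})}\big(N,\ \mathbb{k}(\operatorname{Int}\mathcal{P})/(e)\big)=0 . \]
   Context: $\mathbb{k}$ is a field. $\mathcal{P}\cup\{\infty\}$ is $\mathcal{P}$ with a new maximum $\infty$. $\operatorname{Int}\mathcal{P}=\{(a,b):a\le b,\ a,b\in\mathcal{P}\cup\{\infty\}\}$ with the product order. For a finite poset $\mathcal{Q}$, the incidence algebra $\mathbb{k}\mathcal{Q}$ has vector space basis the pairs $[x,y]$ with $x\le y$ in $\mathcal{Q}$ and multiplication $[x,y][y,z]=[x,z]$, $[x,y][z,w]=0$ if $y\ne z$. A representation $N\in\mathrm{vec}^{\mathcal{Q}}$ is a right $\mathbb{k}\mathcal{Q}$-module via $x\cdot[p,q]=N(p\le q)(x)$ for $x\in N(p)$ (and $0$ on other components). Here $e\coloneqq\sum_{c}[(c,c),(c,c)]\in\mathbb{k}(\operatorname{Int}\mathcal{P})$, the sum over the diagonal elements $(c,c)$ of $\operatorname{Int}\mathcal{P}$, and $(e)$ is the two-sided ideal it generates; $\mathbb{k}(\operatorname{Int}\mathcal{P})/(e)$ is regarded as a left $\mathbb{k}(\operatorname{Int}\mathcal{P})$-module. *)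

theory Defs
  imports Main
begin

text \<open>The incidence algebra kQ has basis the pairs [x,y] with x \<le> y (Abasis).
  A representation N in vec^Q is given in coordinates: N(q) = k^(dimN q) with
  standard basis indexed by i < dimN q, and Nmap p q is the matrix of
  N(p \<le> q) (entry Nmap p q j i = j-th coordinate of the image of the i-th
  basis vector of N(p)).  Vectors in a space with basis B are functions B \<Rightarrow> k
  (only the values on B matter).\<close>

definition Abasis :: "'q set \<Rightarrow> ('q \<Rightarrow> 'q \<Rightarrow> bool) \<Rightarrow> ('q \<times> 'q) set" where
  "Abasis Qs le = {(x, y). x \<in> Qs \<and> y \<in> Qs \<and> le x y}"

definition Nbasis :: "'q set \<Rightarrow> ('q \<Rightarrow> nat) \<Rightarrow> ('q \<times> nat) set" where
  "Nbasis Qs dimN = {(p, i). p \<in> Qs \<and> i < dimN p}"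

definition is_rep :: "'q set \<Rightarrow> ('q \<Rightarrow> 'q \<Rightarrow> bool) \<Rightarrow> ('q \<Rightarrow> nat)
    \<Rightarrow> ('q \<Rightarrow> 'q \<Rightarrow> nat \<Rightarrow> nat \<Rightarrow> 'k::field) \<Rightarrow> bool" where
  "is_rep Qs le dimN Nmap \<longleftrightarrow>
     (\<forall>p\<in>Qs. \<forall>i<dimN p. \<forall>j<dimN p. Nmap p p j i = (if i = j then 1 else 0)) \<and>
     (\<forall>p\<in>Qs. \<forall>q\<in>Qs. \<forall>r\<in>Qs. le p q \<longrightarrow> le q r \<longrightarrow>
        (\<forall>i<dimN p. \<forall>j<dimN r. Nmap p r j i = (\<Sum>l<dimN q. Nmap q r j l * Nmap p q l i)))"

text \<open>Structure constants of the incidence algebra: [x,y][z,w] = [x,w] if y = z, else 0.\<close>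
definition mulA :: "('q \<times> 'q) \<Rightarrow> ('q \<times> 'q) \<Rightarrow> ('q \<times> 'q) \<Rightarrow> 'k::field" where
  "mulA a b c = (if snd a = fst b \<and> c = (fst a, snd b) then 1 else 0)"

text \<open>Right action of basis elements of kQ on basis vectors of N:
  x \<cdot> [p,q] = N(p \<le> q)(x) for x \<in> N(p), and 0 on other components.\<close>
definition actN :: "('q \<Rightarrow> nat) \<Rightarrow> ('q \<Rightarrow> 'q \<Rightarrow> nat \<Rightarrow> nat \<Rightarrow> 'k::field)
    \<Rightarrow> ('q \<times> nat) \<Rightarrow> ('q \<times> 'q) \<Rightarrow> ('q \<times> nat) \<Rightarrow> 'k" where
  "actN dimN Nmap n a n' =
     (if fst n = fst a \<and> fst n' = snd a \<and> snd n < dimN (fst n) \<and> snd n' < dimN (fst n')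
      then Nmap (fst a) (snd a) (snd n') (snd n) else 0)"

definition basis_vec :: "'b \<Rightarrow> 'b \<Rightarrow> 'k::field" where
  "basis_vec b = (\<lambda>t. if t = b then 1 else 0)"

definition alg_mult :: "'q set \<Rightarrow> ('q \<Rightarrow> 'q \<Rightarrow> bool)
    \<Rightarrow> (('q \<times> 'q) \<Rightarrow> 'k::field) \<Rightarrow> (('q \<times> 'q) \<Rightarrow> 'k) \<Rightarrow> ('q \<times> 'q) \<Rightarrow> 'k" where
  "alg_mult Qs le x y = (\<lambda>t. \<Sum>b1\<in>Abasis Qs le. \<Sum>b2\<in>Abasis Qs le. x b1 * y b2 * mulA b1 b2 t)"

definition idem_sum :: "'q set \<Rightarrow> ('q \<times> 'q) \<Rightarrow> 'k::field" where
  "idem_sum D = (\<lambda>b. if \<exists>c\<in>D. b = (c, c) then 1 else 0)"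

definition gen_ideal :: "'q set \<Rightarrow> ('q \<Rightarrow> 'q \<Rightarrow> bool) \<Rightarrow> (('q \<times> 'q) \<Rightarrow> 'k::field)
    \<Rightarrow> (('q \<times> 'q) \<Rightarrow> 'k) set" where
  "gen_ideal Qs le E = {x. \<exists>c. \<forall>b\<in>Abasis Qs le.
      x b = (\<Sum>b1\<in>Abasis Qs le. \<Sum>b2\<in>Abasis Qs le.
               c b1 b2 * alg_mult Qs le (alg_mult Qs le (basis_vec b1) E) (basis_vec b2) b)}"

text \<open>Basis of N \<otimes>_k A^{\<otimes> d} \<otimes>_k A.  The bar complex N \<otimes>_A B(A) \<otimes>_A M
  with B_d(A) = A \<otimes> A^{\<otimes> d} \<otimes> A is N \<otimes> A^{\<otimes> d} \<otimes> M; for M = A/I it is the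
  quotient of N \<otimes> A^{\<otimes> d} \<otimes> A by the subcomplex N \<otimes> A^{\<otimes> d} \<otimes> I.\<close>
definition chain_basis :: "'q set \<Rightarrow> ('q \<Rightarrow> 'q \<Rightarrow> bool) \<Rightarrow> ('q \<Rightarrow> nat) \<Rightarrow> nat
    \<Rightarrow> (('q \<times> nat) \<times> ('q \<times> 'q) list \<times> ('q \<times> 'q)) set" where
  "chain_basis Qs le dimN d = {(n, as, a). n \<in> Nbasis Qs dimN \<and> length as = d \<and>
      set as \<subseteq> Abasis Qs le \<and> a \<in> Abasis Qs le}"

text \<open>Bar differential on a basis tensor n \<otimes> a_1 \<otimes> ... \<otimes> a_d \<otimes> a:
  (n a_1) \<otimes> a_2 ... \<otimes> a + \<Sum>_{i=1}^{d-1} (-1)^i n \<otimes> ... \<otimes> a_i a_{i+1} \<otimes> ... \<otimes> a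
  + (-1)^d n \<otimes> a_1 \<otimes> ... \<otimes> a_{d-1} \<otimes> a_d a;  bar_bd s t is the coefficient of t.\<close>
definition bar_bd :: "('q \<Rightarrow> nat) \<Rightarrow> ('q \<Rightarrow> 'q \<Rightarrow> nat \<Rightarrow> nat \<Rightarrow> 'k::field)
    \<Rightarrow> (('q \<times> nat) \<times> ('q \<times> 'q) list \<times> ('q \<times> 'q))
    \<Rightarrow> (('q \<times> nat) \<times> ('q \<times> 'q) list \<times> ('q \<times> 'q)) \<Rightarrow> 'k" where
  "bar_bd dimN Nmap s t =
     (case s of (n, as, a) \<Rightarrow> case t of (n', bs, b) \<Rightarrow>
        let d = length as in
        (if as \<noteq> [] \<and> bs = tl as \<and> b = a then actN dimN Nmap n (hd as) n' else 0)
      + (\<Sum>i\<in>{1..<d}. if n' = n \<and> b = a \<and> length bs = d - 1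
                         \<and> take (i - 1) bs = take (i - 1) as \<and> drop i bs = drop (i + 1) as
                      then (-1) ^ i * mulA (as ! (i - 1)) (as ! i) (bs ! (i - 1)) else 0)
      + (if as \<noteq> [] \<and> n' = n \<and> bs = butlast as
         then (-1) ^ d * mulA (last as) a b else 0))"

definition bar_boundary :: "'q set \<Rightarrow> ('q \<Rightarrow> 'q \<Rightarrow> bool) \<Rightarrow> ('q \<Rightarrow> nat)
    \<Rightarrow> ('q \<Rightarrow> 'q \<Rightarrow> nat \<Rightarrow> nat \<Rightarrow> 'k::field) \<Rightarrow> nat
    \<Rightarrow> ((('q \<times> nat) \<times> ('q \<times> 'q) list \<times> ('q \<times> 'q)) \<Rightarrow> 'k)
    \<Rightarrow> (('q \<times> nat) \<times> ('q \<times> 'q) list \<times> ('q \<times> 'q)) \<Rightarrow> 'k" where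
  "bar_boundary Qs le dimN Nmap d f =
     (\<lambda>t. \<Sum>s\<in>chain_basis Qs le dimN d. f s * bar_bd dimN Nmap s t)"

definition in_sub :: "'q set \<Rightarrow> ('q \<Rightarrow> 'q \<Rightarrow> bool) \<Rightarrow> ('q \<Rightarrow> nat) \<Rightarrow> nat
    \<Rightarrow> (('q \<times> 'q) \<Rightarrow> 'k::field) set
    \<Rightarrow> ((('q \<times> nat) \<times> ('q \<times> 'q) list \<times> ('q \<times> 'q)) \<Rightarrow> 'k) \<Rightarrow> bool" where
  "in_sub Qs le dimN d I v \<longleftrightarrow>
     (\<forall>n\<in>Nbasis Qs dimN. \<forall>as. length as = d \<and> set as \<subseteq> Abasis Qs le \<longrightarrow>
        (\<lambda>b. v (n, as, b)) \<in> I)"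

text \<open>Tor_d^{kQ}(N, kQ/(e)) = 0 for d \<ge> 1, i.e. the d-th homology of the bar complex
  N \<otimes> A^{\<otimes> \<bullet>} \<otimes> (A/(e)) vanishes: every d-cycle modulo N \<otimes> A^{\<otimes> d} \<otimes> (e) is a
  boundary modulo N \<otimes> A^{\<otimes> d} \<otimes> (e).\<close>
definition Tor_quot_vanishes :: "'q set \<Rightarrow> ('q \<Rightarrow> 'q \<Rightarrow> bool) \<Rightarrow> ('q \<Rightarrow> nat)
    \<Rightarrow> ('q \<Rightarrow> 'q \<Rightarrow> nat \<Rightarrow> nat \<Rightarrow> 'k::field) \<Rightarrow> (('q \<times> 'q) \<Rightarrow> 'k) \<Rightarrow> nat \<Rightarrow> bool" where
  "Tor_quot_vanishes Qs le dimN Nmap E d \<longleftrightarrow>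
     (let I = gen_ideal Qs le E in
      \<forall>v. in_sub Qs le dimN (d - 1) I (bar_boundary Qs le dimN Nmap d v) \<longrightarrow>
        (\<exists>w. in_sub Qs le dimN d I (\<lambda>t. v t - bar_boundary Qs le dimN Nmap (Suc d) w t)))"

text \<open>P \<union> {\<infinity>} is modelled as 'p option, with None = \<infinity> the new maximum.\<close>
definition ExtP :: "'p set \<Rightarrow> 'p option set" where
  "ExtP P = Some ` P \<union> {None}"

definition le_ext :: "'p::order option \<Rightarrow> 'p option \<Rightarrow> bool" where
  "le_ext a b = (case b of None \<Rightarrow> True
                  | Some y \<Rightarrow> (case a of None \<Rightarrow> False | Some x \<Rightarrow> x \<le> y))"

definition IntP :: "'p::order set \<Rightarrow> ('p option \<times> 'p option) set" where
  "IntP P = {(a, b). a \<in> ExtP P \<and> b \<in> ExtP P \<and> le_ext a b}"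

definition le_Int :: "('p::order option \<times> 'p option) \<Rightarrow> ('p option \<times> 'p option) \<Rightarrow> bool" where
  "le_Int x y \<longleftrightarrow> le_ext (fst x) (fst y) \<and> le_ext (snd x) (snd y)"

definition diagP :: "'p set \<Rightarrow> ('p option \<times> 'p option) set" where
  "diagP P = {(c, c) | c. c \<in> ExtP P}"

end

theory Submission
  imports Defs
begin

locale bc =
  fixes Qs :: "'q set" and le :: "'q \<Rightarrow> 'q \<Rightarrow> bool" and dimN :: "'q \<Rightarrow> nat"
    and Nmap :: "'q \<Rightarrow> 'q \<Rightarrow> nat \<Rightarrow> nat \<Rightarrow> 'k::field"
  assumes finQ: "finite Qs"
    and reflQ: "\<And>x. x \<in> Qs \<Longrightarrow> le x x"
    and transQ: "\<And>x y z. x \<in> Qs \<Longrightarrow> y \<in> Qs \<Longrightarrow> z \<in> Qs \<Longrightarrow> le x y \<Longrightarrow> le y z \<Longrightarrow> le x z"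
    and rep: "is_rep Qs le dimN Nmap"
begin

abbreviation "bd \<equiv> bar_bd dimN Nmap"
abbreviation "AB \<equiv> Abasis Qs le"
abbreviation "NB \<equiv> Nbasis Qs dimN"
abbreviation "CB \<equiv> chain_basis Qs le dimN"
abbreviation "Bd \<equiv> bar_boundary Qs le dimN Nmap"

lemma bd_nil: "bd (n, [], a) t = 0"
  by (cases t) (simp add: bar_bd_def)

lemma bd_last_snd:
  assumes "bd (n, as, a) (n', bs, c) \<noteq> 0"
  shows "snd c = snd a"
proof (rule ccontr)
  assume h: "snd c \<noteq> snd a"
  hence "c \<noteq> a" by auto
  moreover have "mulA (last as) a c = (0::'k)" using h by (auto simp: mulA_def)
  ultimately have "bd (n, as, a) (n', bs, c) = 0"
    by (simp add: bar_bd_def Let_def)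
  with assms show False by simp
qed

lemma bd_RM:
  "bd (n, as, (x, m)) (n', bs, (x', m)) = bd (n, as, (x, y)) (n', bs, (x', y))"
  by (simp add: bar_bd_def Let_def mulA_def)

lemma bd_AP:
  assumes len: "length bs = length as"
  shows "bd (n, as @ [a], b) (n', bs, c) =
    (if bs \<noteq> [] \<and> c = b then bd (n, as, a) (n', butlast bs, last bs) else 0)
    + (if n' = n \<and> bs = as then (-1)^(length as + 1) * mulA a b c else 0)
    + (if as = [] \<and> c = b then actN dimN Nmap n a n' else 0)"
proof (cases "as = []")
  case True
  then show ?thesis using len by (simp add: bar_bd_def)
next
  case False
  define d where "d = length as"
  have d1: "d \<ge> 1" using False d_def by (cases as) auto
  obtain bs0 x where bs: "bs = bs0 @ [x]" using False len
    by (metis append_butlast_last_id length_0_conv)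
  have lbs0: "length bs0 = d - 1" using len bs d_def by simp
  have split: "{1..<Suc d} = insert d {1..<d}" using d1 by auto
  let ?L = "as @ [a]"
  have mid: "(\<Sum>i\<in>{1..<d}. if n' = n \<and> c = b \<and> length bs = Suc d - 1
                         \<and> take (i - 1) bs = take (i - 1) ?L \<and> drop i bs = drop (i + 1) ?L
                      then (-1) ^ i * mulA (?L ! (i - 1)) (?L ! i) (bs ! (i - 1)) else (0::'k))
     = (if c = b then (\<Sum>i\<in>{1..<d}. if n' = n \<and> x = a \<and> length bs0 = d - 1
                         \<and> take (i - 1) bs0 = take (i - 1) as \<and> drop i bs0 = drop (i + 1) as
                      then (-1) ^ i * mulA (as ! (i - 1)) (as ! i) (bs0 ! (i - 1)) else 0) else 0)"
  proof -
    have "(if n' = n \<and> c = b \<and> length bs = Suc d - 1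
                         \<and> take (i - 1) bs = take (i - 1) ?L \<and> drop i bs = drop (i + 1) ?L
                      then (-1) ^ i * mulA (?L ! (i - 1)) (?L ! i) (bs ! (i - 1)) else (0::'k))
     = (if c = b then (if n' = n \<and> x = a \<and> length bs0 = d - 1
                         \<and> take (i - 1) bs0 = take (i - 1) as \<and> drop i bs0 = drop (i + 1) as
                      then (-1) ^ i * mulA (as ! (i - 1)) (as ! i) (bs0 ! (i - 1)) else 0) else 0)"
      if i: "i \<in> {1..<d}" for i
    proof -
      have e1: "take (i - 1) bs = take (i - 1) bs0" using i lbs0 bs by simp
      have e2: "take (i - 1) ?L = take (i - 1) as" using i d_def by simp
      have e3: "drop i bs = drop i bs0 @ [x]" using i lbs0 bs by simp
      have e4: "drop (i+1) ?L = drop (i+1) as @ [a]" using i d_def by simp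
      have e5: "?L ! (i - 1) = as ! (i - 1)" "?L ! i = as ! i" using i d_def by (auto simp: nth_append)
      have e6: "bs ! (i - 1) = bs0 ! (i - 1)" using i lbs0 bs by (auto simp: nth_append)
      show ?thesis using len lbs0 d_def unfolding e1 e2 e3 e4 e5 e6 by auto
    qed
    then show ?thesis by (cases "c = b") (auto intro: sum.cong)
  qed
  have lastd: "(if n' = n \<and> c = b \<and> length bs = Suc d - 1
                         \<and> take (d - 1) bs = take (d - 1) ?L \<and> drop d bs = drop (d + 1) ?L
                      then (-1) ^ d * mulA (?L ! (d - 1)) (?L ! d) (bs ! (d - 1)) else (0::'k))
      = (if c = b then (if n' = n \<and> bs0 = butlast as then (-1) ^ d * mulA (last as) a x else 0) else 0)"
  proof -
    have "take (d - 1) bs = bs0" using lbs0 bs by simp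
    moreover have "take (d - 1) ?L = butlast as" using d_def by (simp add: butlast_conv_take)
    moreover have "drop d bs = []" "drop (d+1) ?L = []" using len d_def by auto
    moreover have "?L ! (d - 1) = last as" "?L ! d = a" using d1 d_def False
      by (auto simp: nth_append last_conv_nth)
    moreover have "bs ! (d - 1) = x" using lbs0 bs d1 by (simp add: nth_append)
    ultimately show ?thesis using len d_def by auto
  qed
  have first: "(if ?L \<noteq> [] \<and> bs = tl ?L \<and> c = b then actN dimN Nmap n (hd ?L) n' else 0)
     = (if c = b then (if as \<noteq> [] \<and> bs0 = tl as \<and> x = a then actN dimN Nmap n (hd as) n' else 0) else (0::'k))"
    using False bs by auto
  have ins: "(\<Sum>i\<in>insert d {1..<d}. f i) = f d + (\<Sum>i\<in>{1..<d}. f i)" for f :: "nat \<Rightarrow> 'k"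
    by simp
  show ?thesis
    unfolding bar_bd_def Let_def prod.case length_append_singleton d_def[symmetric]
    unfolding split ins mid lastd first
    unfolding bs butlast_snoc last_snoc
    using False d_def apply (cases "c = b") apply simp_all
    done
qed

lemma finNB: "finite NB"
proof -
  have "NB \<subseteq> Qs \<times> {..<Max (dimN ` Qs)}" 
    using finQ by (auto simp: Nbasis_def) (meson Max_ge finite_imageI image_eqI order_less_le_trans)
  thus ?thesis using finQ by (meson finite_SigmaI finite_lessThan finite_subset)
qed

lemma finAB: "finite AB"
proof -
  have "AB \<subseteq> Qs \<times> Qs" by (auto simp: Abasis_def)
  thus ?thesis using finQ by (meson finite_SigmaI finite_subset)
qed

lemma finCB: "finite (CB d)"
proof -
  have "CB d \<subseteq> NB \<times> {as. set as \<subseteq> AB \<and> length as = d} \<times> AB"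
    by (auto simp: chain_basis_def)
  moreover have "finite {as. set as \<subseteq> AB \<and> length as = d}"
    using finAB by (rule finite_lists_length_eq)
  ultimately show ?thesis using finNB finAB by (meson finite_SigmaI finite_subset)
qed

lemma CB_iff: "(n, as, a) \<in> CB d \<longleftrightarrow> n \<in> NB \<and> length as = d \<and> set as \<subseteq> AB \<and> a \<in> AB"
  by (simp add: chain_basis_def)

lemma Bd0: "Bd 0 f t = 0"
  unfolding bar_boundary_def chain_basis_def
  by (rule sum.neutral) (auto simp: bd_nil)

lemma sum_single:
  assumes "finite S" "\<And>t. t \<in> S \<Longrightarrow> f t \<noteq> 0 \<Longrightarrow> t = t0"
  shows "sum f S = (if t0 \<in> S then f t0 else 0)"
proof -
  have "sum f S = (\<Sum>t\<in>S. if t = t0 then f t else 0)"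
    using assms by (intro sum.cong) auto
  thus ?thesis using assms(1) by (simp add: sum.delta')
qed

lemma sum_reidx:
  assumes "finite T" "g ` S \<subseteq> T" "inj_on g S" "\<And>t. t \<in> T \<Longrightarrow> t \<notin> g ` S \<Longrightarrow> f t = 0"
  shows "sum f T = (\<Sum>s\<in>S. f (g s))"
proof -
  have "sum f T = sum f (g ` S)"
    using assms by (intro sum.mono_neutral_right) auto
  also have "\<dots> = (\<Sum>s\<in>S. f (g s))" using assms(3) by (simp add: sum.reindex)
  finally show ?thesis .
qed

definition hA :: "(('q \<times> nat) \<times> ('q \<times> 'q) list \<times> ('q \<times> 'q) \<Rightarrow> 'k) \<Rightarrow> ('q \<times> nat) \<times> ('q \<times> 'q) list \<times> ('q \<times> 'q) \<Rightarrow> 'k" where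
  "hA v = (\<lambda>(n', bs, c). if bs \<noteq> [] \<and> c = (snd (last bs), snd (last bs))
      then (-1)^(length bs) * v (n', butlast bs, last bs) else 0)"

lemma F1:
  assumes d1: "d \<ge> 1" and u: "u \<in> CB d"
  shows "Bd (Suc d) (hA v) u = v u - hA (Bd d v) u"
proof -
  obtain n' bs c where u_eq: "u = (n', bs, c)" by (cases u) auto
  have lbs: "length bs = d" using u u_eq by (simp add: CB_iff)
  hence bsne: "bs \<noteq> []" using d1 by auto
  define u0 where "u0 = (n', butlast bs, last bs)"
  define C where "C = (c = (snd (last bs), snd (last bs)))"
  define gA where "gA = (\<lambda>(n::'q \<times> nat, as::('q\<times>'q) list, a::'q\<times>'q). (n, as @ [a], (snd a, snd a)))"
  have "Bd (Suc d) (hA v) u = (\<Sum>t\<in>CB (Suc d). hA v t * bd t u)"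
    by (simp add: bar_boundary_def)
  also have "\<dots> = (\<Sum>s\<in>CB d. hA v (gA s) * bd (gA s) u)"
  proof (rule sum_reidx[OF finCB])
    show "gA ` CB d \<subseteq> CB (Suc d)"
      by (auto simp: gA_def chain_basis_def Abasis_def intro: reflQ)
    show "inj_on gA (CB d)" by (auto simp: inj_on_def gA_def)
    fix t assume t: "t \<in> CB (Suc d)" "t \<notin> gA ` CB d"
    obtain m es e where te: "t = (m, es, e)" by (cases t) auto
    show "hA v t * bd t u = 0"
    proof (cases "es \<noteq> [] \<and> e = (snd (last es), snd (last es))")
      case True
      have "(m, butlast es, last es) \<in> CB d" using t(1) True te
        by (auto simp: CB_iff dest: in_set_butlastD)
      moreover have "gA (m, butlast es, last es) = t" using True te by (simp add: gA_def)
      ultimately show ?thesis using t(2) by (metis image_eqI)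
    qed (auto simp: hA_def te)
  qed
  also have "\<dots> = (\<Sum>s\<in>CB d. (if C then (-1)^(Suc d) * (v s * bd s u0) else 0) + (if s = u then v s else 0))"
  proof (rule sum.cong[OF refl])
    fix s assume s: "s \<in> CB d"
    obtain n0 as0 a0 where se: "s = (n0, as0, a0)" by (cases s) auto
    have las: "length as0 = d" using s se by (simp add: CB_iff)
    hence asne: "as0 \<noteq> []" using d1 by auto
    have h1: "hA v (gA s) = (-1)^(Suc d) * v s" using las se by (simp add: gA_def hA_def)
    have h2: "bd (gA s) u = (if c = (snd a0, snd a0) then bd s u0 else 0)
        + (if n' = n0 \<and> bs = as0 then (-1)^(Suc d) * mulA a0 (snd a0, snd a0) c else 0)"
      using bd_AP[of bs as0 n0 a0 "(snd a0, snd a0)" n' c] las lbs asne bsne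
      by (simp add: gA_def se u_eq u0_def)
    have h3: "(if c = (snd a0, snd a0) then bd s u0 else 0) = (if C then bd s u0 else 0)"
    proof (cases "bd s u0 = 0")
      case False
      hence "snd (last bs) = snd a0" using bd_last_snd se u0_def by metis
      thus ?thesis unfolding C_def by simp
    qed simp
    have h4: "mulA a0 (snd a0, snd a0) c = (if c = a0 then 1 else (0::'k))"
      by (cases a0) (auto simp: mulA_def)
    have sq: "((-1::'k)^(Suc d)) * (-1)^(Suc d) = 1"
      by (metis power_add power_minus1_even mult_2 even_add)
    show "hA v (gA s) * bd (gA s) u = (if C then (-1)^(Suc d) * (v s * bd s u0) else 0) + (if s = u then v s else 0)"
      unfolding h1 h2 h3 h4 using sq
      by (auto simp: se u_eq algebra_simps)
  qed
  also have "\<dots> = (if C then (-1)^(Suc d) * Bd d v u0 else 0) + v u"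
    by (simp add: sum.distrib sum.delta' finCB u bar_boundary_def sum_distrib_left)
  also have "\<dots> = v u - hA (Bd d v) u"
    using bsne lbs by (simp add: hA_def u_eq u0_def C_def)
  finally show ?thesis .
qed

end

context bc begin

lemma sum_reidx2:
  assumes "finite T" "g ` S \<subseteq> T" "inj_on g S" "\<And>t. t \<in> T \<Longrightarrow> t \<notin> g ` S \<Longrightarrow> f t = 0"
    "\<And>s. s \<in> S \<Longrightarrow> f (g s) = h s"
  shows "sum f T = sum h S"
  using sum_reidx[OF assms(1-4)] assms(5) by simp

lemma sum_single2:
  assumes "finite S" "\<And>t. t \<in> S \<Longrightarrow> f t \<noteq> 0 \<Longrightarrow> t = t0" "t0 \<in> S \<Longrightarrow> f t0 = r"
  shows "sum f S = (if t0 \<in> S then r else 0)"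
proof -
  have "sum f S = (if t0 \<in> S then f t0 else 0)"
    using assms(2) by (intro sum_single[OF assms(1)]) auto
  thus ?thesis using assms(3) by auto
qed

lemma LS2:
  assumes s: "(n, as, a) \<in> CB d" and nz: "bd (n, as, a) (n', bs, c) \<noteq> 0"
  shows "c \<in> AB"
proof (rule ccontr)
  assume cn: "c \<notin> AB"
  have aAB: "a \<in> AB" using s by (simp add: CB_iff)
  hence "c \<noteq> a" using cn by auto
  moreover have "as \<noteq> [] \<longrightarrow> mulA (last as) a c = (0::'k)"
  proof
    assume ne: "as \<noteq> []"
    have "last as \<in> AB" using s ne by (auto simp: CB_iff)
    show "mulA (last as) a c = 0"
    proof (rule ccontr)
      assume "mulA (last as) a c \<noteq> 0"
      hence c: "c = (fst (last as), snd a)" and m: "snd (last as) = fst a"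
        by (auto simp: mulA_def split: if_splits)
      have "c \<in> AB" using \<open>last as \<in> AB\<close> aAB transQ[of "fst (last as)" "fst a" "snd a"] c m
        by (auto simp: Abasis_def)
      with cn show False by simp
    qed
  qed
  ultimately have "bd (n, as, a) (n', bs, c) = 0"
    by (auto simp: bar_bd_def Let_def)
  with nz show False by simp
qed

lemma rep_comp:
  assumes "p \<in> Qs" "q \<in> Qs" "r \<in> Qs" "le p q" "le q r" "i < dimN p" "j < dimN r"
  shows "Nmap p r j i = (\<Sum>l<dimN q. Nmap q r j l * Nmap p q l i)"
proof -
  have "\<forall>p\<in>Qs. \<forall>q\<in>Qs. \<forall>r\<in>Qs. le p q \<longrightarrow> le q r \<longrightarrow>
        (\<forall>i<dimN p. \<forall>j<dimN r. Nmap p r j i = (\<Sum>l<dimN q. Nmap q r j l * Nmap p q l i))"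
    using rep by (simp add: is_rep_def)
  thus ?thesis using assms by blast
qed

lemma comp:
  assumes a1: "a1 \<in> AB" and a: "a \<in> AB"
  shows "(\<Sum>m\<in>NB. actN dimN Nmap n a1 m * actN dimN Nmap m a n')
       = (if snd a1 = fst a then actN dimN Nmap n (fst a1, snd a) n' else 0)"
proof (cases "snd a1 = fst a")
  case False
  have "actN dimN Nmap n a1 m * actN dimN Nmap m a n' = 0" for m
    using False by (auto simp: actN_def)
  thus ?thesis using False by (auto intro!: sum.neutral)
next
  case True
  define q where "q = snd a1"
  define G where "G = (fst n = fst a1 \<and> fst n' = snd a \<and> snd n < dimN (fst n) \<and> snd n' < dimN (fst n'))"
  have "(\<Sum>m\<in>NB. actN dimN Nmap n a1 m * actN dimN Nmap m a n')
      = (\<Sum>l\<in>{..<dimN q}. actN dimN Nmap n a1 (q, l) * actN dimN Nmap (q, l) a n')"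
  proof (rule sum_reidx[OF finNB])
    show "(\<lambda>l. (q, l)) ` {..<dimN q} \<subseteq> NB" using a1 by (auto simp: Nbasis_def Abasis_def q_def)
    show "inj_on (\<lambda>l. (q, l)) {..<dimN q}" by (auto simp: inj_on_def)
    fix t assume "t \<in> NB" "t \<notin> (\<lambda>l. (q, l)) ` {..<dimN q}"
    thus "actN dimN Nmap n a1 t * actN dimN Nmap t a n' = 0"
      by (cases t) (auto simp: actN_def q_def)
  qed
  also have "\<dots> = (\<Sum>l\<in>{..<dimN q}. if G then Nmap q (snd a) (snd n') l * Nmap (fst a1) q l (snd n) else 0)"
  proof (rule sum.cong[OF refl])
    fix l assume "l \<in> {..<dimN q}"
    thus "actN dimN Nmap n a1 (q, l) * actN dimN Nmap (q, l) a n' =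
      (if G then Nmap q (snd a) (snd n') l * Nmap (fst a1) q l (snd n) else 0)"
      using True unfolding G_def actN_def q_def by (cases n; cases n') (auto simp: mult.commute)
  qed
  also have "\<dots> = (if G then Nmap (fst a1) (snd a) (snd n') (snd n) else 0)"
  proof (cases G)
    case True
    have "fst a1 \<in> Qs" "q \<in> Qs" "snd a \<in> Qs" "le (fst a1) q" "le q (snd a)"
      using a1 a \<open>snd a1 = fst a\<close> by (auto simp: Abasis_def q_def)
    moreover have "snd n < dimN (fst a1)" "snd n' < dimN (snd a)" using True G_def by auto
    ultimately show ?thesis using True rep_comp by simp
  qed simp
  also have "\<dots> = (if snd a1 = fst a then actN dimN Nmap n (fst a1, snd a) n' else 0)"
    using True unfolding actN_def G_def by (cases n; cases n') auto
  finally show ?thesis .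
qed

lemma Q3lem:
  assumes s0: "(n, [a1], a) \<in> CB 1"
  shows "(\<Sum>t\<in>CB 0. bd (n, [a1], a) t * actN dimN Nmap (fst t) (snd (snd t)) n') = 0"
proof -
  have a1: "a1 \<in> AB" and a: "a \<in> AB" and nNB: "n \<in> NB" using s0 by (auto simp: CB_iff)
  have bdf: "bd (n, [a1], a) (m, [], e) = (if e = a then actN dimN Nmap n a1 m else 0)
      - (if m = n then mulA a1 a e else 0)" for m e
    using bd_AP[of "[]" "[]" n a1 a m e] by simp
  have "(\<Sum>t\<in>CB 0. bd (n, [a1], a) t * actN dimN Nmap (fst t) (snd (snd t)) n')
    = (\<Sum>t\<in>CB 0. (if snd (snd t) = a then actN dimN Nmap n a1 (fst t) * actN dimN Nmap (fst t) a n' else 0))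
    - (\<Sum>t\<in>CB 0. (if fst t = n then mulA a1 a (snd (snd t)) * actN dimN Nmap n (snd (snd t)) n' else 0))"
    unfolding sum_subtractf[symmetric]
  proof (rule sum.cong[OF refl])
    fix t assume "t \<in> CB 0"
    then obtain m e where t: "t = (m, [], e)" by (cases t) (auto simp: chain_basis_def)
    show "bd (n, [a1], a) t * actN dimN Nmap (fst t) (snd (snd t)) n' =
      (if snd (snd t) = a then actN dimN Nmap n a1 (fst t) * actN dimN Nmap (fst t) a n' else 0) -
      (if fst t = n then mulA a1 a (snd (snd t)) * actN dimN Nmap n (snd (snd t)) n' else 0)"
      unfolding t fst_conv snd_conv bdf by (cases "e = a"; cases "m = n") (simp_all add: algebra_simps)
  qed
  also have "(\<Sum>t\<in>CB 0. (if snd (snd t) = a then actN dimN Nmap n a1 (fst t) * actN dimN Nmap (fst t) a n' else 0))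
      = (\<Sum>m\<in>NB. actN dimN Nmap n a1 m * actN dimN Nmap m a n')"
  proof (rule sum_reidx2[OF finCB])
    show "(\<lambda>m. (m, [], a)) ` NB \<subseteq> CB 0" using a by (auto simp: chain_basis_def)
    show "inj_on (\<lambda>m. (m, [], a)) NB" by (auto simp: inj_on_def)
    fix t assume "t \<in> CB 0" "t \<notin> (\<lambda>m. (m, [], a)) ` NB"
    thus "(if snd (snd t) = a then actN dimN Nmap n a1 (fst t) * actN dimN Nmap (fst t) a n' else 0) = 0"
      by (cases t) (auto simp: chain_basis_def)
  qed simp
  also have "\<dots> = (if snd a1 = fst a then actN dimN Nmap n (fst a1, snd a) n' else 0)"
    using comp[OF a1 a] .
  also have "(\<Sum>t\<in>CB 0. (if fst t = n then mulA a1 a (snd (snd t)) * actN dimN Nmap n (snd (snd t)) n' else 0))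
      = (if (n, [], (fst a1, snd a)) \<in> CB 0 then (if snd a1 = fst a then actN dimN Nmap n (fst a1, snd a) n' else 0) else 0)"
    by (rule sum_single2[OF finCB]) (auto simp: mulA_def chain_basis_def split: if_splits)
  also have "\<dots> = (if snd a1 = fst a then actN dimN Nmap n (fst a1, snd a) n' else 0)"
  proof -
    have "snd a1 = fst a \<Longrightarrow> (fst a1, snd a) \<in> AB"
      using a1 a transQ[of "fst a1" "snd a1" "snd a"] by (auto simp: Abasis_def)
    thus ?thesis using nNB by (auto simp: chain_basis_def)
  qed
  finally show ?thesis by simp
qed

lemma Q2lem:
  assumes s0: "(n, as, a) \<in> CB (Suc d)" and b: "b \<in> AB" and u: "(nu, bsu, cu) \<in> CB d"
  shows "(\<Sum>t\<in>CB d. bd (n, as, a) t * (if nu = fst t \<and> bsu = fst (snd t) then mulA (snd (snd t)) b cu else 0))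
    = (if snd a = fst b then bd (n, as, (fst a, snd b)) (nu, bsu, cu) else 0)"
    (is "sum ?f _ = ?r")
proof -
  define t0 where "t0 = (nu, bsu, (fst cu, snd a))"
  have RM: "bd (n, as, (fst a, snd b)) (nu, bsu, (fst cu, snd b)) = bd (n, as, a) t0"
    using bd_RM[of n as "fst a" "snd b" nu bsu "fst cu" "snd a"] by (simp add: t0_def)
  have "sum ?f (CB d) = (if t0 \<in> CB d then ?r else 0)"
  proof (rule sum_single2[OF finCB])
    fix t assume t: "t \<in> CB d" "?f t \<noteq> 0"
    obtain m es e where te: "t = (m, es, e)" by (cases t) auto
    have "bd (n, as, a) t \<noteq> 0" using t by auto
    hence "snd e = snd a" using te bd_last_snd by metis
    moreover have "m = nu" "es = bsu" "mulA e b cu \<noteq> (0::'k)" using t te by (auto split: if_splits)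
    ultimately show "t = t0" unfolding t0_def te by (cases cu; cases e) (auto simp: mulA_def split: if_splits)
  next
    assume "t0 \<in> CB d"
    show "?f t0 = ?r"
    proof (cases "snd a = fst b \<and> snd cu = snd b")
      case True
      hence "cu = (fst cu, snd b)" by (cases cu) auto
      hence "?r = bd (n, as, a) t0" using True RM by metis
      moreover have "mulA (fst cu, snd a) b cu = (1::'k)" using True by (cases cu) (auto simp: mulA_def)
      ultimately show ?thesis by (simp add: t0_def)
    next
      case False
      have "?r = 0"
      proof (cases "snd a = fst b")
        case True
        hence "snd cu \<noteq> snd b" using False by simp
        thus ?thesis using bd_last_snd[of n as "(fst a, snd b)" nu bsu cu] by auto
      qed simp
      moreover have "mulA (fst cu, snd a) b cu = (0::'k)" using False by (cases cu) (auto simp: mulA_def)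
      ultimately show ?thesis by (simp add: t0_def)
    qed
  qed
  also have "\<dots> = ?r"
  proof (cases "t0 \<in> CB d")
    case False
    show ?thesis
    proof (rule ccontr)
      assume "(if t0 \<in> CB d then ?r else 0) \<noteq> ?r"
      hence nz: "?r \<noteq> 0" and sab: "snd a = fst b" using False by (auto split: if_splits)
      hence "snd cu = snd b" using bd_last_snd[of n as "(fst a, snd b)" nu bsu cu] by auto
      hence "cu = (fst cu, snd b)" by (cases cu) auto
      hence "bd (n, as, a) t0 \<noteq> 0" using nz sab RM by metis
      hence "(fst cu, snd a) \<in> AB" using LS2[OF s0] by (simp add: t0_def)
      hence "t0 \<in> CB d" using u by (simp add: t0_def CB_iff)
      with False show False by simp
    qed
  qed simp
  finally show ?thesis .
qed

end

context bc begin

lemma sum_if_const: "(\<Sum>t\<in>S. if P then f t else 0) = (if P then sum f S else 0)"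
  by simp

lemma DD_step:
  assumes s: "s \<in> CB (Suc (Suc d))" and u: "u \<in> CB d"
    and IH: "\<And>d' s' u'. d = Suc d' \<Longrightarrow> s' \<in> CB (Suc (Suc d')) \<Longrightarrow> u' \<in> CB d' \<Longrightarrow>
              (\<Sum>t\<in>CB (Suc d'). bd s' t * bd t u') = 0"
  shows "(\<Sum>t\<in>CB (Suc d). bd s t * bd t u) = 0"
proof -
  obtain n as' b where se: "s = (n, as', b)" by (cases s) auto
  have las': "length as' = Suc (Suc d)" using s se by (simp add: CB_iff)
  then obtain as a where as': "as' = as @ [a]" by (metis append_butlast_last_id list.size(3) nat.distinct(1))
  have las: "length as = Suc d" using las' as' by simp
  have s0: "(n, as, a) \<in> CB (Suc d)" and b: "b \<in> AB" and nNB: "n \<in> NB" and aAB: "a \<in> AB"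
    using s se as' las by (auto simp: CB_iff)
  obtain nu bsu cu where ue: "u = (nu, bsu, cu)" by (cases u) auto
  have lbsu: "length bsu = d" and u': "(nu, bsu, cu) \<in> CB d" using u ue by (auto simp: CB_iff)
  define X where "X = (if snd a = fst b then bd (n, as, (fst a, snd b)) u else 0)"
  have sgn: "(-1::'k) ^ (Suc d + 1) = (-1) ^ d" by simp
  have split1: "bd s t = (if snd (snd t) = b then bd (n, as, a) (fst t, butlast (fst (snd t)), last (fst (snd t))) else 0)
      + (if fst t = n \<and> fst (snd t) = as then (-1)^d * mulA a b (snd (snd t)) else 0)" if t: "t \<in> CB (Suc d)" for t
  proof -
    obtain m es e where te: "t = (m, es, e)" by (cases t) auto
    have "length es = Suc d" using t te by (simp add: CB_iff)
    thus ?thesis using bd_AP[of es as n a b m e] las unfolding se as' te sgn by auto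
  qed
  have E1: "(\<Sum>t\<in>CB (Suc d). bd s t * bd t u)
     = (\<Sum>t\<in>CB (Suc d). (if snd (snd t) = b then bd (n, as, a) (fst t, butlast (fst (snd t)), last (fst (snd t))) * bd t u else 0))
     + (\<Sum>t\<in>CB (Suc d). (if fst t = n \<and> fst (snd t) = as then (-1)^d * mulA a b (snd (snd t)) * bd t u else 0))"
    unfolding sum.distrib[symmetric] by (rule sum.cong[OF refl]) (simp add: split1 algebra_simps)
  have E2: "(\<Sum>t\<in>CB (Suc d). (if fst t = n \<and> fst (snd t) = as then (-1)^d * mulA a b (snd (snd t)) * bd t u else 0))
     = (-1)^d * X"
  proof -
    define t0 where "t0 = (n, as, (fst a, snd b))"
    have "(\<Sum>t\<in>CB (Suc d). (if fst t = n \<and> fst (snd t) = as then (-1)^d * mulA a b (snd (snd t)) * bd t u else 0))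
       = (if t0 \<in> CB (Suc d) then (-1)^d * X else 0)"
    proof (rule sum_single2[OF finCB])
      fix t assume "t \<in> CB (Suc d)" "(if fst t = n \<and> fst (snd t) = as then (-1)^d * mulA a b (snd (snd t)) * bd t u else 0) \<noteq> 0"
      thus "t = t0" unfolding t0_def by (cases t) (auto simp: mulA_def split: if_splits)
    next
      show "(if fst t0 = n \<and> fst (snd t0) = as then (-1)^d * mulA a b (snd (snd t0)) * bd t0 u else 0) = (-1)^d * X"
        unfolding t0_def X_def by (auto simp: mulA_def)
    qed
    also have "\<dots> = (-1)^d * X"
    proof (cases "snd a = fst b")
      case True
      have "(fst a, snd b) \<in> AB" using aAB b True transQ[of "fst a" "snd a" "snd b"] by (auto simp: Abasis_def)
      hence "t0 \<in> CB (Suc d)" using s0 by (auto simp: t0_def CB_iff)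
      thus ?thesis by simp
    qed (simp add: X_def)
    finally show ?thesis .
  qed
  have E3: "(\<Sum>t\<in>CB (Suc d). (if snd (snd t) = b then bd (n, as, a) (fst t, butlast (fst (snd t)), last (fst (snd t))) * bd t u else 0))
      = (\<Sum>t0\<in>CB d. bd (n, as, a) t0 * bd (fst t0, fst (snd t0) @ [snd (snd t0)], b) u)"
  proof (rule sum_reidx2[OF finCB])
    let ?g = "\<lambda>t0::('q \<times> nat) \<times> ('q \<times> 'q) list \<times> ('q \<times> 'q). (fst t0, fst (snd t0) @ [snd (snd t0)], b)"
    show "?g ` CB d \<subseteq> CB (Suc d)" using b by (auto simp: chain_basis_def)
    show "inj_on ?g (CB d)" by (auto simp: inj_on_def prod_eq_iff)
    fix t assume t: "t \<in> CB (Suc d)" "t \<notin> ?g ` CB d"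
    obtain m es e where te: "t = (m, es, e)" by (cases t) auto
    show "(if snd (snd t) = b then bd (n, as, a) (fst t, butlast (fst (snd t)), last (fst (snd t))) * bd t u else 0) = 0"
    proof (cases "e = b")
      case True
      have les: "length es = Suc d" using t te by (simp add: CB_iff)
      have "last es \<in> set es" using les by (intro last_in_set) auto
      hence m1: "(m, butlast es, last es) \<in> CB d" using t te les by (auto simp: CB_iff dest: in_set_butlastD)
      have "butlast es @ [last es] = es" using les by (intro append_butlast_last_id) auto
      hence m2: "?g (m, butlast es, last es) = t" using True te by simp
      have "t \<in> ?g ` CB d"
      proof (rule image_eqI[where x="(m, butlast es, last es)"])
        show "t = ?g (m, butlast es, last es)" using m2 by simp
      qed (rule m1)
      with t(2) show ?thesis by simp
    qed (simp add: te)
  next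
    fix t0 assume "t0 \<in> CB d"
    show "(\<lambda>t. if snd (snd t) = b then bd (n, as, a) (fst t, butlast (fst (snd t)), last (fst (snd t))) * bd t u else 0)
        (fst t0, fst (snd t0) @ [snd (snd t0)], b) = bd (n, as, a) t0 * bd (fst t0, fst (snd t0) @ [snd (snd t0)], b) u"
      by simp
  qed
  have E4: "(\<Sum>t0\<in>CB d. bd (n, as, a) t0 * bd (fst t0, fst (snd t0) @ [snd (snd t0)], b) u) = (if bsu \<noteq> [] \<and> cu = b then (\<Sum>t0\<in>CB d. bd (n, as, a) t0 * bd t0 (nu, butlast bsu, last bsu)) else 0)
     + (-1)^(d+1) * (\<Sum>t0\<in>CB d. bd (n, as, a) t0 * (if nu = fst t0 \<and> bsu = fst (snd t0) then mulA (snd (snd t0)) b cu else 0))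
     + (if cu = b then (\<Sum>t0\<in>CB d. bd (n, as, a) t0 * (if fst (snd t0) = [] then actN dimN Nmap (fst t0) (snd (snd t0)) nu else 0)) else 0)"
  proof -
    have "bd (n, as, a) t0 * bd (fst t0, fst (snd t0) @ [snd (snd t0)], b) u
       = (if bsu \<noteq> [] \<and> cu = b then bd (n, as, a) t0 * bd t0 (nu, butlast bsu, last bsu) else 0)
       + (-1)^(d+1) * (bd (n, as, a) t0 * (if nu = fst t0 \<and> bsu = fst (snd t0) then mulA (snd (snd t0)) b cu else 0))
       + (if cu = b then bd (n, as, a) t0 * (if fst (snd t0) = [] then actN dimN Nmap (fst t0) (snd (snd t0)) nu else 0) else 0)"
      if t0: "t0 \<in> CB d" for t0
    proof -
      obtain m es e where te: "t0 = (m, es, e)" by (cases t0) auto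
      have "length es = d" using t0 te by (simp add: CB_iff)
      hence "bd (m, es @ [e], b) (nu, bsu, cu) = (if bsu \<noteq> [] \<and> cu = b then bd (m, es, e) (nu, butlast bsu, last bsu) else 0)
          + (if nu = m \<and> bsu = es then (-1)^(d+1) * mulA e b cu else 0)
          + (if es = [] \<and> cu = b then actN dimN Nmap m e nu else 0)"
        using bd_AP[of bsu es m e b nu cu] lbsu by simp
      thus ?thesis unfolding te ue by (simp add: algebra_simps)
    qed
    hence "(\<Sum>t0\<in>CB d. bd (n, as, a) t0 * bd (fst t0, fst (snd t0) @ [snd (snd t0)], b) u)
       = (\<Sum>t0\<in>CB d. (if bsu \<noteq> [] \<and> cu = b then bd (n, as, a) t0 * bd t0 (nu, butlast bsu, last bsu) else 0)
       + (-1)^(d+1) * (bd (n, as, a) t0 * (if nu = fst t0 \<and> bsu = fst (snd t0) then mulA (snd (snd t0)) b cu else 0))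
       + (if cu = b then bd (n, as, a) t0 * (if fst (snd t0) = [] then actN dimN Nmap (fst t0) (snd (snd t0)) nu else 0) else 0))"
      by (rule sum.cong[OF refl])
    thus ?thesis by (simp only: sum.distrib sum_distrib_left[symmetric] sum_if_const)
  qed
  have Q1: "(if bsu \<noteq> [] \<and> cu = b then (\<Sum>t0\<in>CB d. bd (n, as, a) t0 * bd t0 (nu, butlast bsu, last bsu)) else 0) = 0"
  proof (cases "bsu \<noteq> []")
    case True
    then obtain d' where dd: "d = Suc d'" using lbsu by (cases d) auto
    have "(nu, butlast bsu, last bsu) \<in> CB d'"
    proof -
      have "last bsu \<in> set bsu" using True by (intro last_in_set)
      thus ?thesis using u' lbsu dd by (auto simp: CB_iff dest: in_set_butlastD)
    qed
    hence "(\<Sum>t0\<in>CB d. bd (n, as, a) t0 * bd t0 (nu, butlast bsu, last bsu)) = 0"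
      using IH[OF dd] s0 dd by simp
    thus ?thesis by simp
  qed simp
  have Q2: "(\<Sum>t0\<in>CB d. bd (n, as, a) t0 * (if nu = fst t0 \<and> bsu = fst (snd t0) then mulA (snd (snd t0)) b cu else 0)) = X"
    using Q2lem[OF s0 b u'] by (simp add: X_def ue)
  have Q3: "(if cu = b then (\<Sum>t0\<in>CB d. bd (n, as, a) t0 * (if fst (snd t0) = [] then actN dimN Nmap (fst t0) (snd (snd t0)) nu else 0)) else 0) = 0"
  proof (cases d)
    case 0
    then obtain a1 where "as = [a1]" using las by (cases as) auto
    hence "(\<Sum>t0\<in>CB d. bd (n, as, a) t0 * (if fst (snd t0) = [] then actN dimN Nmap (fst t0) (snd (snd t0)) nu else 0))
        = (\<Sum>t\<in>CB 0. bd (n, [a1], a) t * actN dimN Nmap (fst t) (snd (snd t)) nu)"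
      using 0 by (intro sum.cong) (auto simp: chain_basis_def)
    also have "\<dots> = 0" using Q3lem s0 \<open>as = [a1]\<close> 0 by simp
    finally show ?thesis by simp
  next
    case (Suc d')
    have "(\<Sum>t0\<in>CB d. bd (n, as, a) t0 * (if fst (snd t0) = [] then actN dimN Nmap (fst t0) (snd (snd t0)) nu else 0)) = 0"
      using Suc by (intro sum.neutral) (auto simp: chain_basis_def)
    thus ?thesis by simp
  qed
  have "(-1::'k)^(d+1) * X + (-1)^d * X = 0" by simp
  thus ?thesis unfolding E1 E2 E3 E4 Q1 Q2 Q3 by simp
qed

lemma DD:
  "s \<in> CB (Suc (Suc d)) \<Longrightarrow> u \<in> CB d \<Longrightarrow> (\<Sum>t\<in>CB (Suc d). bd s t * bd t u) = 0"
proof (induction d arbitrary: s u)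
  case 0
  show ?case by (rule DD_step[OF 0(1,2)]) auto
next
  case (Suc d)
  show ?case by (rule DD_step[OF Suc.prems]) (use Suc.IH in auto)
qed

lemma DDv:
  assumes u: "u \<in> CB e"
  shows "Bd (Suc e) (Bd (Suc (Suc e)) v) u = 0"
proof -
  have "Bd (Suc e) (Bd (Suc (Suc e)) v) u
      = (\<Sum>t\<in>CB (Suc e). (\<Sum>s\<in>CB (Suc (Suc e)). v s * bd s t) * bd t u)"
    by (simp add: bar_boundary_def)
  also have "\<dots> = (\<Sum>t\<in>CB (Suc e). \<Sum>s\<in>CB (Suc (Suc e)). v s * (bd s t * bd t u))"
    by (simp add: sum_distrib_right mult.assoc)
  also have "\<dots> = (\<Sum>s\<in>CB (Suc (Suc e)). \<Sum>t\<in>CB (Suc e). v s * (bd s t * bd t u))"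
    by (rule sum.swap)
  also have "\<dots> = (\<Sum>s\<in>CB (Suc (Suc e)). v s * (\<Sum>t\<in>CB (Suc e). bd s t * bd t u))"
    by (simp add: sum_distrib_left)
  also have "\<dots> = 0" using DD u by simp
  finally show ?thesis .
qed

lemma Bd_diff: "Bd d (\<lambda>t. f t - g t) u = Bd d f u - Bd d g u"
  by (simp add: bar_boundary_def sum_subtractf left_diff_distrib)

lemma hA_zero:
  assumes u: "u \<in> CB (Suc e)" and f0: "\<And>t. t \<in> CB e \<Longrightarrow> f t = 0"
  shows "hA f u = 0"
proof -
  obtain n bs c where ue: "u = (n, bs, c)" by (cases u) auto
  have "length bs = Suc e" using u ue by (simp add: CB_iff)
  hence bne: "bs \<noteq> []" by auto
  hence "last bs \<in> set bs" by (rule last_in_set)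
  hence "(n, butlast bs, last bs) \<in> CB e" using u ue by (auto simp: CB_iff dest: in_set_butlastD)
  thus ?thesis using f0 by (simp add: hA_def ue)
qed

end

locale bc2 = bc Qs le dimN Nmap
  for Qs :: "'q set" and le :: "'q \<Rightarrow> 'q \<Rightarrow> bool" and dimN :: "'q \<Rightarrow> nat"
    and Nmap :: "'q \<Rightarrow> 'q \<Rightarrow> nat \<Rightarrow> nat \<Rightarrow> 'k::field" +
  fixes good :: "'q \<times> 'q \<Rightarrow> bool" and mid :: "'q \<Rightarrow> 'q"
  assumes G1: "\<And>a. a \<in> Abasis Qs le \<Longrightarrow> good a \<Longrightarrow>
      (fst a, mid (snd a)) \<in> Abasis Qs le \<and> (mid (snd a), snd a) \<in> Abasis Qs le"
    and G4: "\<And>y. (mid y, y) \<in> Abasis Qs le \<Longrightarrow> good (mid y, y)"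
    and G5: "\<And>a n n'. a \<in> Abasis Qs le \<Longrightarrow> good a \<Longrightarrow> actN dimN Nmap n (fst a, mid (snd a)) n' = 0"
begin

definition hI :: "(('q \<times> nat) \<times> ('q \<times> 'q) list \<times> ('q \<times> 'q) \<Rightarrow> 'k) \<Rightarrow> ('q \<times> nat) \<times> ('q \<times> 'q) list \<times> ('q \<times> 'q) \<Rightarrow> 'k" where
  "hI v = (\<lambda>(n', bs, c). if bs \<noteq> [] \<and> snd (last bs) = fst c \<and> fst c = mid (snd c)
      then (-1)^(length bs) * v (n', butlast bs, (fst (last bs), snd c)) else 0)"

lemma hI_zero:
  assumes u: "u \<in> CB e" and f0: "\<And>t. t \<in> CB (e - 1) \<Longrightarrow> f t = 0"
  shows "hI f u = 0"
proof -
  obtain n bs c where ue: "u = (n, bs, c)" by (cases u) auto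
  show ?thesis
  proof (cases "bs \<noteq> [] \<and> snd (last bs) = fst c \<and> fst c = mid (snd c)")
    case True
    have lbs: "length bs = e" using u ue by (simp add: CB_iff)
    have "last bs \<in> set bs" using True by auto
    hence l: "last bs \<in> AB" and cA: "c \<in> AB" using u ue by (auto simp: CB_iff)
    hence "(fst (last bs), snd c) \<in> AB"
      using True transQ[of "fst (last bs)" "snd (last bs)" "snd c"] by (auto simp: Abasis_def)
    hence "(n, butlast bs, (fst (last bs), snd c)) \<in> CB (e - 1)"
      using u ue lbs by (auto simp: CB_iff dest: in_set_butlastD)
    thus ?thesis using f0 by (simp add: hI_def ue)
  qed (auto simp: hI_def ue)
qed

lemma F2:
  assumes vbad: "\<And>s. s \<in> CB e \<Longrightarrow> \<not> good (snd (snd s)) \<Longrightarrow> v s = 0" and u: "u \<in> CB e"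
  shows "Bd (Suc e) (hI v) u = v u - hI (Bd e v) u"
proof -
  obtain n' bs c where u_eq: "u = (n', bs, c)" by (cases u) auto
  have lbs: "length bs = e" using u u_eq by (simp add: CB_iff)
  define u1 where "u1 = (n', butlast bs, (fst (last bs), snd c))"
  define C where "C = (bs \<noteq> [] \<and> snd (last bs) = fst c \<and> fst c = mid (snd c))"
  define gI where "gI = (\<lambda>(n::'q \<times> nat, as::('q\<times>'q) list, a::'q\<times>'q).
      (n, as @ [(fst a, mid (snd a))], (mid (snd a), snd a)))"
  define S where "S = {s \<in> CB e. good (snd (snd s))}"
  have hIg: "hI v (gI s) = (-1)^(Suc e) * v s" if s: "s \<in> CB e" for s
  proof -
    obtain n0 as0 a0 where se: "s = (n0, as0, a0)" by (cases s) auto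
    have "length as0 = e" using s se by (simp add: CB_iff)
    thus ?thesis by (simp add: hI_def gI_def se)
  qed
  have "Bd (Suc e) (hI v) u = (\<Sum>t\<in>CB (Suc e). hI v t * bd t u)"
    by (simp add: bar_boundary_def)
  also have "\<dots> = (\<Sum>s\<in>S. hI v (gI s) * bd (gI s) u)"
  proof (rule sum_reidx[OF finCB])
    show "gI ` S \<subseteq> CB (Suc e)"
    proof
      fix t assume "t \<in> gI ` S"
      then obtain n0 as0 a0 where s: "(n0, as0, a0) \<in> S" and te: "t = gI (n0, as0, a0)" by auto
      have "a0 \<in> AB" "good a0" using s by (auto simp: S_def CB_iff)
      thus "t \<in> CB (Suc e)" using G1[of a0] s te by (auto simp: S_def CB_iff gI_def)
    qed
    show "inj_on gI S" by (auto simp: inj_on_def gI_def prod_eq_iff)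
    fix t assume t: "t \<in> CB (Suc e)" "t \<notin> gI ` S"
    obtain m es e' where te: "t = (m, es, e')" by (cases t) auto
    show "hI v t * bd t u = 0"
    proof (cases "es \<noteq> [] \<and> snd (last es) = fst e' \<and> fst e' = mid (snd e')")
      case True
      define s where "s = (m, butlast es, (fst (last es), snd e'))"
      have les: "length es = Suc e" using t te by (simp add: CB_iff)
      have "last es \<in> set es" using True by auto
      hence l: "last es \<in> AB" and eA: "e' \<in> AB" using t te by (auto simp: CB_iff)
      hence "(fst (last es), snd e') \<in> AB"
        using True transQ[of "fst (last es)" "snd (last es)" "snd e'"] by (auto simp: Abasis_def)
      hence sC: "s \<in> CB e" using t te les by (auto simp: CB_iff s_def dest: in_set_butlastD)
      have "butlast es @ [last es] = es" using True by (intro append_butlast_last_id) auto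
      moreover have "last es = (fst (last es), mid (snd e'))" using True by (metis prod.collapse)
      moreover have "e' = (mid (snd e'), snd e')" using True by (metis prod.collapse)
      ultimately have gs: "gI s = t" unfolding s_def gI_def te by simp
      show ?thesis
      proof (cases "good (snd (snd s))")
        case True
        hence "s \<in> S" using sC by (simp add: S_def)
        hence "t \<in> gI ` S" using gs by (metis image_eqI)
        with t(2) show ?thesis by simp
      next
        case False
        hence "v s = 0" using vbad sC by simp
        thus ?thesis using True les by (simp add: hI_def te s_def)
      qed
    qed (auto simp: hI_def te)
  qed
  also have "\<dots> = (\<Sum>s\<in>CB e. hI v (gI s) * bd (gI s) u)"
    by (rule sum.mono_neutral_left[OF finCB]) (auto simp: S_def hIg vbad)
  also have "\<dots> = (\<Sum>s\<in>CB e. (if C then (-1)^(Suc e) * (v s * bd s u1) else 0) + (if s = u then v s else 0))"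
  proof (rule sum.cong[OF refl])
    fix s assume s: "s \<in> CB e"
    obtain n0 as0 a0 where se: "s = (n0, as0, a0)" by (cases s) auto
    obtain x y where a0: "a0 = (x, y)" by (cases a0) auto
    have las: "length as0 = e" using s se by (simp add: CB_iff)
    have sq: "((-1::'k)^(Suc e)) * (-1)^(Suc e) = 1"
      by (metis power_add power_minus1_even mult_2 even_add)
    show "hI v (gI s) * bd (gI s) u = (if C then (-1)^(Suc e) * (v s * bd s u1) else 0) + (if s = u then v s else 0)"
    proof (cases "good a0")
      case False
      hence "v s = 0" using vbad s se by simp
      thus ?thesis using hIg[OF s] by (cases "s = u") auto
    next
      case True
      have a0A: "a0 \<in> AB" using s se by (simp add: CB_iff)
      have act0: "actN dimN Nmap n0 (x, mid y) n'' = 0" for n'' using G5[OF a0A True] a0 by simp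
      have h2: "bd (gI s) u = (if bs \<noteq> [] \<and> c = (mid y, y) then bd (n0, as0, (x, mid y)) (n', butlast bs, last bs) else 0)
          + (if n' = n0 \<and> bs = as0 then (-1)^(Suc e) * mulA (x, mid y) (mid y, y) c else 0)"
        using bd_AP[of bs as0 n0 "(x, mid y)" "(mid y, y)" n' c] las lbs act0
        by (simp add: gI_def se a0 u_eq)
      have h3: "(if bs \<noteq> [] \<and> c = (mid y, y) then bd (n0, as0, (x, mid y)) (n', butlast bs, last bs) else 0)
          = (if C then bd s u1 else 0)"
      proof (cases "bs \<noteq> []")
        case bne: True
        obtain x' m' where lb: "last bs = (x', m')" by (cases "last bs") auto
        show ?thesis
        proof (cases "c = (mid y, y)")
          case True
          have "C = (m' = mid y)" using True bne lb by (simp add: C_def)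
          moreover have "m' = mid y \<Longrightarrow> bd (n0, as0, (x, mid y)) (n', butlast bs, last bs) = bd s u1"
            using bd_RM[of n0 as0 x "mid y" n' "butlast bs" x' y] lb True by (simp add: se a0 u1_def)
          moreover have "m' \<noteq> mid y \<Longrightarrow> bd (n0, as0, (x, mid y)) (n', butlast bs, last bs) = 0"
            using bd_last_snd[of n0 as0 "(x, mid y)" n' "butlast bs" "last bs"] lb by auto
          ultimately show ?thesis using True bne by auto
        next
          case False
          have "C \<Longrightarrow> bd s u1 = 0"
          proof (rule ccontr)
            assume C and "bd s u1 \<noteq> 0"
            hence "snd c = y" using bd_last_snd[of n0 as0 a0 n' "butlast bs" "(fst (last bs), snd c)"]
              by (simp add: se u1_def a0)
            with \<open>C\<close> have "c = (mid y, y)" unfolding C_def by (metis prod.collapse)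
            with False show False by simp
          qed
          thus ?thesis using False by auto
        qed
      qed (simp add: C_def)
      have h4: "mulA (x, mid y) (mid y, y) c = (if c = a0 then 1 else (0::'k))"
        by (auto simp: mulA_def a0)
      show ?thesis unfolding hIg[OF s] h2 h3 h4 using sq
        by (auto simp: se u_eq algebra_simps)
    qed
  qed
  also have "\<dots> = (if C then (-1)^(Suc e) * Bd e v u1 else 0) + v u"
    by (simp add: sum.distrib sum.delta' finCB u bar_boundary_def sum_distrib_left)
  also have "\<dots> = v u - hI (Bd e v) u"
    using lbs by (simp add: hI_def u_eq u1_def C_def)
  finally show ?thesis .
qed

lemma main_gen:
  assumes d1: "d \<ge> 1" and hyp: "\<And>u. u \<in> CB (d - 1) \<Longrightarrow> \<not> good (snd (snd u)) \<Longrightarrow> Bd d v u = 0"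
  shows "\<exists>w. \<forall>u\<in>CB d. \<not> good (snd (snd u)) \<longrightarrow> v u - Bd (Suc d) w u = 0"
proof -
  define c where "c = Bd d v"
  define z where "z = hI c"
  define w where "w = hA (\<lambda>t. v t - z t)"
  obtain e where de: "d = Suc e" using d1 by (cases d) auto
  have cz: "Bd d z t = c t" if t: "t \<in> CB e" for t
  proof -
    have "Bd (Suc e) (hI c) t = c t - hI (Bd e c) t"
      by (rule F2) (use hyp de t c_def in auto)
    moreover have "hI (Bd e c) t = 0"
    proof (rule hI_zero[OF t])
      fix t' assume t': "t' \<in> CB (e - 1)"
      show "Bd e c t' = 0"
      proof (cases e)
        case 0 thus ?thesis by (simp add: Bd0)
      next
        case (Suc e') thus ?thesis using DDv[of t' e' v] t' c_def de by simp
      qed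
    qed
    ultimately show ?thesis using de z_def by simp
  qed
  have "v u - Bd (Suc d) w u = 0" if u: "u \<in> CB d" "\<not> good (snd (snd u))" for u
  proof -
    have "Bd (Suc d) w u = (v u - z u) - hA (Bd d (\<lambda>t. v t - z t)) u"
      unfolding w_def by (rule F1[OF d1 u(1)])
    moreover have "hA (Bd d (\<lambda>t. v t - z t)) u = 0"
    proof (rule hA_zero[of u e])
      show "u \<in> CB (Suc e)" using u de by simp
      fix t assume "t \<in> CB e"
      thus "Bd d (\<lambda>t. v t - z t) t = 0" by (simp add: Bd_diff cz c_def)
    qed
    moreover have "z u = 0"
    proof (rule ccontr)
      assume nz: "z u \<noteq> 0"
      obtain n bs cc where ue: "u = (n, bs, cc)" by (cases u) auto
      have "fst cc = mid (snd cc)" using nz by (auto simp: z_def hI_def ue split: if_splits)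
      hence "cc = (mid (snd cc), snd cc)" by (metis prod.collapse)
      moreover have "cc \<in> AB" using u ue by (simp add: CB_iff)
      ultimately have "good cc" using G4 by metis
      with u(2) ue show False by simp
    qed
    ultimately show ?thesis by simp
  qed
  thus ?thesis by blast
qed

end


lemma le_ext_refl: "le_ext a a" by (cases a) (auto simp: le_ext_def)

lemma le_ext_trans: "le_ext a b \<Longrightarrow> le_ext b c \<Longrightarrow> le_ext a c"
  by (cases a; cases b; cases c) (auto simp: le_ext_def)

lemma le_Int_refl: "le_Int x x" by (simp add: le_Int_def le_ext_refl)

lemma le_Int_trans: "le_Int x y \<Longrightarrow> le_Int y z \<Longrightarrow> le_Int x z"
  by (auto simp: le_Int_def intro: le_ext_trans)

lemma finite_IntP: "finite P \<Longrightarrow> finite (IntP P)"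
proof -
  assume "finite P"
  hence "finite (ExtP P)" by (simp add: ExtP_def)
  moreover have "IntP P \<subseteq> ExtP P \<times> ExtP P" by (auto simp: IntP_def)
  ultimately show ?thesis by (meson finite_SigmaI finite_subset)
qed

lemma IntP_iff: "(a, b) \<in> IntP P \<longleftrightarrow> a \<in> ExtP P \<and> b \<in> ExtP P \<and> le_ext a b"
  by (simp add: IntP_def)

lemma sum_single_g:
  assumes "finite S" "\<And>t. t \<in> S \<Longrightarrow> f t \<noteq> 0 \<Longrightarrow> t = t0" "t0 \<in> S \<Longrightarrow> f t0 = r"
  shows "sum f S = (if t0 \<in> S then r else 0)"
proof -
  have "sum f S = (\<Sum>t\<in>S. if t = t0 then f t else 0)"
    using assms(2) by (intro sum.cong) auto
  thus ?thesis using assms(1,3) by (simp add: sum.delta')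
qed

lemma alg_E:
  fixes P :: "'p::order set"
  assumes finP: "finite P" and b1: "b1 \<in> Abasis (IntP P) le_Int" and b2: "b2 \<in> Abasis (IntP P) le_Int"
  shows "alg_mult (IntP P) le_Int (alg_mult (IntP P) le_Int (basis_vec b1) (idem_sum (diagP P))) (basis_vec b2) b
     = (if fst (snd b1) = snd (snd b1) \<and> snd b1 = fst b2 \<and> b = (fst b1, snd b2) then 1 else (0::'k::field))"
proof -
  let ?AB = "Abasis (IntP P) le_Int"
  let ?E = "idem_sum (diagP P) :: _ \<Rightarrow> 'k"
  have finAB: "finite ?AB"
  proof -
    have "?AB \<subseteq> IntP P \<times> IntP P" by (auto simp: Abasis_def)
    thus ?thesis using finite_IntP[OF finP] by (meson finite_SigmaI finite_subset)
  qed
  define X1 where "X1 = alg_mult (IntP P) le_Int (basis_vec b1) ?E"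
  have X1: "X1 t = (if fst (snd b1) = snd (snd b1) \<and> t = b1 then 1 else 0)" for t
  proof -
    have "X1 t = (\<Sum>p\<in>?AB. \<Sum>q\<in>?AB. basis_vec b1 p * ?E q * mulA p q t)"
      by (simp add: X1_def alg_mult_def)
    also have "\<dots> = (\<Sum>q\<in>?AB. basis_vec b1 b1 * ?E q * mulA b1 q t)"
    proof -
      have z: "(\<Sum>q\<in>?AB. basis_vec b1 p * ?E q * mulA p q t) = 0" if "p \<noteq> b1" for p
        using that by (simp add: basis_vec_def)
      show ?thesis by (rule trans[OF sum_single_g[OF finAB, of _ b1]]) (use z b1 in auto)
    qed
    also have "\<dots> = (if (snd b1, snd b1) \<in> ?AB then ?E (snd b1, snd b1) * mulA b1 (snd b1, snd b1) t else 0)"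
      by (rule sum_single_g[OF finAB]) (auto simp: basis_vec_def idem_sum_def mulA_def diagP_def split: if_splits)
    also have "\<dots> = (if fst (snd b1) = snd (snd b1) \<and> t = b1 then 1 else 0)"
    proof -
      have "snd b1 \<in> IntP P" using b1 by (auto simp: Abasis_def)
      hence inA: "(snd b1, snd b1) \<in> ?AB" by (auto simp: Abasis_def le_Int_refl)
      have "?E (snd b1, snd b1) = (if fst (snd b1) = snd (snd b1) then 1 else 0)"
        using \<open>snd b1 \<in> IntP P\<close> by (cases "snd b1") (auto simp: idem_sum_def diagP_def IntP_iff)
      thus ?thesis using inA by (auto simp: mulA_def)
    qed
    finally show ?thesis .
  qed
  have "alg_mult (IntP P) le_Int X1 (basis_vec b2) b = (\<Sum>p\<in>?AB. \<Sum>q\<in>?AB. X1 p * basis_vec b2 q * mulA p q b)"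
    by (simp add: alg_mult_def)
  also have "\<dots> = (\<Sum>q\<in>?AB. X1 b1 * basis_vec b2 q * mulA b1 q b)"
  proof -
    have z: "(\<Sum>q\<in>?AB. X1 p * basis_vec b2 q * mulA p q b) = 0" if "p \<noteq> b1" for p
      using that by (simp add: X1)
    show ?thesis by (rule trans[OF sum_single_g[OF finAB, of _ b1]]) (use z b1 in auto)
  qed
  also have "\<dots> = X1 b1 * basis_vec b2 b2 * mulA b1 b2 b"
  proof -
    have z: "X1 b1 * basis_vec b2 q * mulA b1 q b = 0" if "q \<noteq> b2" for q
      using that by (simp add: basis_vec_def)
    show ?thesis by (rule trans[OF sum_single_g[OF finAB, of _ b2]]) (use z b2 in auto)
  qed
  also have "\<dots> = (if fst (snd b1) = snd (snd b1) \<and> snd b1 = fst b2 \<and> b = (fst b1, snd b2) then 1 else 0)"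
    by (auto simp: X1 basis_vec_def mulA_def)
  finally show ?thesis by (simp add: X1_def)
qed

lemma ideal_char:
  fixes P :: "'p::order set" and f :: "('p option \<times> 'p option) \<times> ('p option \<times> 'p option) \<Rightarrow> 'k::field"
  assumes finP: "finite P"
  shows "f \<in> gen_ideal (IntP P) le_Int (idem_sum (diagP P)) \<longleftrightarrow>
    (\<forall>b\<in>Abasis (IntP P) le_Int. \<not> le_ext (snd (fst b)) (fst (snd b)) \<longrightarrow> f b = 0)"
proof -
  let ?AB = "Abasis (IntP P) le_Int"
  let ?E = "idem_sum (diagP P) :: _ \<Rightarrow> 'k"
  have finAB: "finite ?AB"
  proof -
    have "?AB \<subseteq> IntP P \<times> IntP P" by (auto simp: Abasis_def)
    thus ?thesis using finite_IntP[OF finP] by (meson finite_SigmaI finite_subset)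
  qed
  have goodpair: "le_ext (snd (fst b)) (fst (snd b))"
    if "b1 \<in> ?AB" "b2 \<in> ?AB" "fst (snd b1) = snd (snd b1)" "snd b1 = fst b2" "b = (fst b1, snd b2)" for b b1 b2
  proof -
    have "le_ext (snd (fst b1)) (snd (snd b1))" "le_ext (fst (snd b1)) (fst (snd b2))"
      using that(1,2,4) by (auto simp: Abasis_def le_Int_def)
    thus ?thesis using that(3,5) by (auto intro: le_ext_trans)
  qed
  show ?thesis
  proof
    assume "f \<in> gen_ideal (IntP P) le_Int ?E"
    then obtain c where c: "\<forall>b\<in>?AB. f b = (\<Sum>b1\<in>?AB. \<Sum>b2\<in>?AB.
        c b1 b2 * alg_mult (IntP P) le_Int (alg_mult (IntP P) le_Int (basis_vec b1) ?E) (basis_vec b2) b)"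
      by (auto simp: gen_ideal_def)
    show "\<forall>b\<in>?AB. \<not> le_ext (snd (fst b)) (fst (snd b)) \<longrightarrow> f b = 0"
    proof (intro ballI impI)
      fix b assume b: "b \<in> ?AB" "\<not> le_ext (snd (fst b)) (fst (snd b))"
      have "f b = (\<Sum>b1\<in>?AB. \<Sum>b2\<in>?AB.
        c b1 b2 * alg_mult (IntP P) le_Int (alg_mult (IntP P) le_Int (basis_vec b1) ?E) (basis_vec b2) b)"
        using c b by auto
      also have "\<dots> = 0"
      proof (intro sum.neutral ballI)
        fix b1 b2 assume "b1 \<in> ?AB" "b2 \<in> ?AB"
        show "c b1 b2 * alg_mult (IntP P) le_Int (alg_mult (IntP P) le_Int (basis_vec b1) ?E) (basis_vec b2) b = 0"
        proof (cases "fst (snd b1) = snd (snd b1) \<and> snd b1 = fst b2 \<and> b = (fst b1, snd b2)")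
          case True
          hence "le_ext (snd (fst b)) (fst (snd b))" using goodpair \<open>b1 \<in> ?AB\<close> \<open>b2 \<in> ?AB\<close> by blast
          with b(2) show ?thesis by simp
        next
          case False
          show ?thesis by (subst alg_E[OF finP \<open>b1 \<in> ?AB\<close> \<open>b2 \<in> ?AB\<close>, of b]) (simp only: if_not_P[OF False] mult_zero_right)
        qed
      qed
      finally show "f b = 0" .
    qed
  next
    assume fz: "\<forall>b\<in>?AB. \<not> le_ext (snd (fst b)) (fst (snd b)) \<longrightarrow> f b = 0"
    define c where "c = (\<lambda>b1 b2. if fst (snd b1) = snd (snd b1) \<and> snd b1 = fst b2 \<and> fst b2 = (fst (snd b2), fst (snd b2))
        then f (fst b1, snd b2) else (0::'k))"
    show "f \<in> gen_ideal (IntP P) le_Int ?E"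
      unfolding gen_ideal_def
    proof (intro CollectI exI[of _ c] ballI)
      fix b assume b: "b \<in> ?AB"
      define B1 where "B1 = (fst b, (fst (snd b), fst (snd b)))"
      define B2 where "B2 = ((fst (snd b), fst (snd b)), snd b)"
      let ?F = "\<lambda>b1 b2. c b1 b2 * alg_mult (IntP P) le_Int (alg_mult (IntP P) le_Int (basis_vec b1) ?E) (basis_vec b2) b"
      have F: "?F b1 b2 = (if b1 = B1 \<and> b2 = B2 then f b else 0)" if "b1 \<in> ?AB" "b2 \<in> ?AB" for b1 b2
      proof -
        let ?cond = "fst (snd b1) = snd (snd b1) \<and> snd b1 = fst b2 \<and> b = (fst b1, snd b2)"
        have e: "?F b1 b2 = c b1 b2 * (if ?cond then 1 else 0)" by (simp only: alg_E[OF finP that])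
        show ?thesis
        proof (cases "b1 = B1 \<and> b2 = B2")
          case True
          thus ?thesis unfolding e by (simp add: c_def B1_def B2_def)
        next
          case False
          have "\<not> (?cond \<and> fst b2 = (fst (snd b2), fst (snd b2)))"
          proof
            assume H: "?cond \<and> fst b2 = (fst (snd b2), fst (snd b2))"
            have hb: "b = (fst b1, snd b2)" and h1: "fst b2 = (fst (snd b2), fst (snd b2))"
              and h3: "snd b1 = fst b2" using H by blast+
            have h2: "snd b2 = snd b" and h4: "fst b1 = fst b" using hb by (metis snd_conv, metis fst_conv)
            have "b2 = B2" unfolding B2_def using h1 h2 by (metis prod.collapse)
            moreover have "b1 = B1" unfolding B1_def using h1 h2 h3 h4 by (metis prod.collapse)
            ultimately have "b2 = B2" "b1 = B1" by auto
            with False show False by simp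
          qed
          hence z: "c b1 b2 * (if ?cond then 1 else 0) = 0" unfolding c_def by auto
          have "?F b1 b2 = 0" using e z by (rule trans)
          thus ?thesis by (simp only: if_not_P[OF False])
        qed
      qed
      have "(\<Sum>b1\<in>?AB. \<Sum>b2\<in>?AB. ?F b1 b2) = (\<Sum>b1\<in>?AB. \<Sum>b2\<in>?AB. if b1 = B1 \<and> b2 = B2 then f b else 0)"
        using F by (intro sum.cong) auto
      also have "\<dots> = (if B1 \<in> ?AB \<and> B2 \<in> ?AB then f b else 0)"
      proof -
        have "(\<Sum>b2\<in>?AB. if b1 = B1 \<and> b2 = B2 then f b else 0) = (if b1 = B1 \<and> B2 \<in> ?AB then f b else 0)" for b1
          by (rule trans[OF sum_single_g[OF finAB, of _ B2 "if b1 = B1 then f b else 0"]]) (auto split: if_splits)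
        hence "(\<Sum>b1\<in>?AB. \<Sum>b2\<in>?AB. if b1 = B1 \<and> b2 = B2 then f b else 0)
            = (\<Sum>b1\<in>?AB. if b1 = B1 \<and> B2 \<in> ?AB then f b else 0)" by simp
        also have "\<dots> = (if B1 \<in> ?AB \<and> B2 \<in> ?AB then f b else 0)"
          by (rule trans[OF sum_single_g[OF finAB, of _ B1 "if B2 \<in> ?AB then f b else 0"]]) (auto split: if_splits)
        finally show ?thesis .
      qed
      also have "\<dots> = f b"
      proof (cases "le_ext (snd (fst b)) (fst (snd b))")
        case True
        obtain x1 x2 y1 y2 where be: "b = ((x1, x2), (y1, y2))" by (metis prod.collapse)
        have "B1 \<in> ?AB \<and> B2 \<in> ?AB" using b True
          by (auto simp: be B1_def B2_def Abasis_def IntP_iff le_Int_def le_ext_refl intro: le_ext_trans)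
        thus ?thesis by simp
      qed (use fz b in auto)
      finally show "f b = (\<Sum>b1\<in>?AB. \<Sum>b2\<in>?AB. ?F b1 b2)" by simp
    qed
  qed
qed



theorem propositionA7:
  fixes P :: "'p::order set"
    and dimN :: "'p option \<times> 'p option \<Rightarrow> nat"
    and Nmap :: "'p option \<times> 'p option \<Rightarrow> 'p option \<times> 'p option \<Rightarrow> nat \<Rightarrow> nat \<Rightarrow> 'k::field"
    and d :: nat
  assumes "finite P"
    and "is_rep (IntP P) le_Int dimN Nmap"
    and "\<forall>a\<in>ExtP P. \<forall>b\<in>ExtP P. \<forall>c\<in>ExtP P. \<forall>d'\<in>ExtP P.
           le_ext a b \<and> le_ext b c \<and> le_ext c d' \<longrightarrow>
           (\<forall>i<dimN (a, b). \<forall>j<dimN (c, d'). Nmap (a, b) (c, d') j i = 0)"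
    and "d > 0"
  shows "Tor_quot_vanishes (IntP P) le_Int dimN Nmap (idem_sum (diagP P)) d"
proof -
  note finP = assms(1) and rep = assms(2) and hypN = assms(3) and d0 = assms(4)
  define good :: "('p option \<times> 'p option) \<times> ('p option \<times> 'p option) \<Rightarrow> bool"
    where "good = (\<lambda>b. le_ext (snd (fst b)) (fst (snd b)))"
  define mid :: "'p option \<times> 'p option \<Rightarrow> 'p option \<times> 'p option"
    where "mid = (\<lambda>y. (fst y, fst y))"
  interpret B: bc2 "IntP P" le_Int dimN Nmap good mid
  proof (unfold_locales)
    show "finite (IntP P)" using finP by (rule finite_IntP)
    show "\<And>x. le_Int x x" by (rule le_Int_refl)
    show "\<And>x y z. le_Int x y \<Longrightarrow> le_Int y z \<Longrightarrow> le_Int x z" by (rule le_Int_trans)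
    show "is_rep (IntP P) le_Int dimN Nmap" by (rule rep)
  next
    fix a :: "('p option \<times> 'p option) \<times> ('p option \<times> 'p option)"
    assume a: "a \<in> Abasis (IntP P) le_Int" "good a"
    obtain x1 x2 y1 y2 where ae: "a = ((x1, x2), (y1, y2))" by (metis prod.collapse)
    have h: "x1 \<in> ExtP P" "x2 \<in> ExtP P" "y1 \<in> ExtP P" "y2 \<in> ExtP P" "le_ext x1 x2" "le_ext y1 y2"
       "le_ext x2 y1"
      using a by (auto simp: ae Abasis_def IntP_iff good_def)
    show "(fst a, mid (snd a)) \<in> Abasis (IntP P) le_Int \<and> (mid (snd a), snd a) \<in> Abasis (IntP P) le_Int"
      using h by (auto simp: ae Abasis_def IntP_iff mid_def le_Int_def le_ext_refl intro: le_ext_trans)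
  next
    fix y :: "'p option \<times> 'p option"
    show "good (mid y, y)" by (simp add: good_def mid_def le_ext_refl)
  next
    fix a :: "('p option \<times> 'p option) \<times> ('p option \<times> 'p option)" and n n' :: "('p option \<times> 'p option) \<times> nat"
    assume a: "a \<in> Abasis (IntP P) le_Int" "good a"
    obtain x1 x2 y1 y2 where ae: "a = ((x1, x2), (y1, y2))" by (metis prod.collapse)
    have h: "x1 \<in> ExtP P" "x2 \<in> ExtP P" "y1 \<in> ExtP P" "le_ext x1 x2" "le_ext x2 y1"
      using a by (auto simp: ae Abasis_def IntP_iff good_def)
    hence "\<forall>i<dimN (x1, x2). \<forall>j<dimN (y1, y1). Nmap (x1, x2) (y1, y1) j i = 0"
      using hypN le_ext_refl by blast
    thus "actN dimN Nmap n (fst a, mid (snd a)) n' = 0"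
      by (auto simp: actN_def ae mid_def)
  qed
  have insub: "in_sub (IntP P) le_Int dimN e (gen_ideal (IntP P) le_Int (idem_sum (diagP P))) f
      \<longleftrightarrow> (\<forall>u\<in>chain_basis (IntP P) le_Int dimN e. \<not> good (snd (snd u)) \<longrightarrow> f u = 0)" for e f
    unfolding in_sub_def ideal_char[OF finP] good_def chain_basis_def by auto
  show ?thesis
    unfolding Tor_quot_vanishes_def Let_def insub
  proof (intro allI impI)
    fix v assume "\<forall>u\<in>chain_basis (IntP P) le_Int dimN (d - 1). \<not> good (snd (snd u)) \<longrightarrow>
        bar_boundary (IntP P) le_Int dimN Nmap d v u = 0"
    thus "\<exists>w. \<forall>u\<in>chain_basis (IntP P) le_Int dimN d. \<not> good (snd (snd u)) \<longrightarrow>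
        v u - bar_boundary (IntP P) le_Int dimN Nmap (Suc d) w u = 0"
      using B.main_gen[of d v] d0 by auto
  qed
qed


end
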